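(* Let $w$ be a perfectly clustering Lyndon word over a totally ordered alphabet, with a palindromic special factorization $w=a_1\pi_1a_2\pi_2\cdots\pi_{k-1}a_k$. Then for every $i\in\{1,\dots,k\}$, the word $$a_i\pi_ia_{i+1}\cdots\pi_{k-1}a_k\,a_1\pi_1a_2\cdots a_{i-1}\pi_{i-1}$$ is the lexicographically smallest conjugate of $w$ beginning with the letter $a_i$.
   Context: A special factorization of $w$ is a factorization $w=a_1\pi_1a_2\cdots\pi_{k-1}a_k$ where the set of letters occurring in $w$ is $\{a_1<\cdots<a_k\}$ and $\pi_1,\dots,\pi_{k-1}$ are words; it is palindromic if every $\pi_i$ is a palindrome. Conjugates of $w$ are the words $yx$ where $w=xy$. Lexicographic order: a proper prefix is smaller. A Lyndon word is a primitive word strictly smaller than its other conjugates. For a primitive word $v$ of length $n$ with conjugates $v_1<\cdots<v_n$, $\mathrm{bw}(v)$ is the word formed by the last letters of $v_1,\dots,v_n$; $v$ is perfectly clustering if $\mathrm{bw}(v)$ is weakly decreasing. *)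

theory Defs
  imports Main "HOL-Library.List_Lexorder"
begin

(* Lexicographic order on words: the order < / \<le> on lists from List_Lexorder
   (lexordp), in which a proper prefix is smaller. *)

definition conjugates :: "'a list \<Rightarrow> 'a list set" where
  "conjugates w = {drop n w @ take n w | n. n \<le> length w}"

definition primitive :: "'a list \<Rightarrow> bool" where
  "primitive w \<longleftrightarrow> w \<noteq> [] \<and>
     \<not> (\<exists>u m. m \<ge> 2 \<and> w = concat (replicate m u))"

definition lyndon :: "'a::linorder list \<Rightarrow> bool" where
  "lyndon w \<longleftrightarrow> primitive w \<and> (\<forall>v \<in> conjugates w. v \<noteq> w \<longrightarrow> w < v)"

definition bw :: "'a::linorder list \<Rightarrow> 'a list" where
  "bw v = map last (sorted_list_of_set (conjugates v))"

definition perfectly_clustering :: "'a::linorder list \<Rightarrow> bool" where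
  "perfectly_clustering v \<longleftrightarrow> primitive v \<and> sorted_wrt (\<ge>) (bw v)"

(* block i of a factorization a_1 pi_1 ... pi_{k-1} a_k (0-indexed):
   a_i pi_i for i < k-1, and a_k alone for i = k-1 *)
definition fblock :: "'a list \<Rightarrow> 'a list list \<Rightarrow> nat \<Rightarrow> 'a list" where
  "fblock as ps i = as ! i # (if i + 1 < length as then ps ! i else [])"

definition special_factorization :: "'a::linorder list \<Rightarrow> 'a list \<Rightarrow> 'a list list \<Rightarrow> bool" where
  "special_factorization w as ps \<longleftrightarrow>
     sorted_wrt (<) as \<and> set as = set w \<and> length ps = length as - 1 \<and>
     w = concat (map (fblock as ps) [0..<length as])"

definition palindromic_special_factorization ::
    "'a::linorder list \<Rightarrow> 'a list \<Rightarrow> 'a list list \<Rightarrow> bool" where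
  "palindromic_special_factorization w as ps \<longleftrightarrow>
     special_factorization w as ps \<and> (\<forall>p \<in> set ps. rev p = p)"

end

theory Submission
  imports Defs
begin

lemma snoc_less_iff:
  fixes xs ys :: "'a::linorder list"
  shows "length xs = length ys \<Longrightarrow> (xs @ [c] < ys @ [c]) = (xs < ys)"
proof (induction xs arbitrary: ys)
  case Nil then show ?case by simp
next
  case (Cons a xs)
  then obtain b ys' where "ys = b # ys'" by (cases ys) auto
  with Cons show ?case by auto
qed

lemma rot_hd: "q < length w \<Longrightarrow> hd (rotate q w) = w ! q"
  by (cases w) (simp_all add: rotate_drop_take hd_append hd_drop_conv_nth)

lemma rot_ne: "w \<noteq> [] \<Longrightarrow> rotate q w \<noteq> []"
  by simp

lemma rot_pred:
  assumes "q < length w"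
  shows "rotate q w = rotate1 (rotate ((q + length w - 1) mod length w) w)"
proof -
  have "rotate1 (rotate ((q + length w - 1) mod length w) w) = rotate (Suc ((q + length w - 1) mod length w)) w"
    by simp
  also have "\<dots> = rotate (Suc ((q + length w - 1) mod length w) mod length w) w"
    by (metis rotate_conv_mod)
  also have "Suc ((q + length w - 1) mod length w) mod length w = q"
  proof (cases q)
    case 0
    then show ?thesis using assms by simp
  next
    case (Suc m)
    then have "q + length w - 1 = m + length w" by simp
    then show ?thesis using assms Suc by simp
  qed
  finally show ?thesis by simp
qed

lemma rot_last:
  assumes "q < length w"
  shows "last (rotate q w) = w ! ((q + length w - 1) mod length w)"
proof -
  have n: "length w > 0" using assms by (cases w) auto
  have "last (rotate q w) = last (rotate1 (rotate ((q + length w - 1) mod length w) w))"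
    using rot_pred[OF assms] by simp
  also have "\<dots> = hd (rotate ((q + length w - 1) mod length w) w)"
    using n by (cases "rotate ((q + length w - 1) mod length w) w") auto
  also have "\<dots> = w ! ((q + length w - 1) mod length w)"
    using n by (simp add: rot_hd)
  finally show ?thesis .
qed

lemma rot_in_conj: "q < length w \<Longrightarrow> rotate q w \<in> conjugates w"
  unfolding conjugates_def by (auto simp: rotate_drop_take intro!: exI[of _ q])

lemma conj_rot: "v \<in> conjugates w \<Longrightarrow> w \<noteq> [] \<Longrightarrow> \<exists>q < length w. v = rotate q w"
  unfolding conjugates_def
proof clarify
  fix m assume m: "m \<le> length w" "w \<noteq> []"
  show "\<exists>q<length w. drop m w @ take m w = rotate q w"
  proof (cases "m = length w")
    case True then show ?thesis using m by (intro exI[of _ 0]) auto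
  next
    case False then show ?thesis using m by (intro exI[of _ m]) (auto simp: rotate_drop_take)
  qed
qed

lemma finite_conj: "finite (conjugates w)"
proof -
  have "conjugates w = (\<lambda>n. drop n w @ take n w) ` {..length w}"
    unfolding conjugates_def by auto
  then show ?thesis by simp
qed

lemma pc_order:
  assumes pc: "perfectly_clustering w" and x: "x \<in> conjugates w" and y: "y \<in> conjugates w"
    and l: "last y < last x"
  shows "x < y"
proof -
  define L where "L = sorted_list_of_set (conjugates w)"
  have sL: "sorted_wrt (<) L" unfolding L_def by (simp add: strict_sorted_list_of_set)
  have setL: "set L = conjugates w" unfolding L_def using finite_conj[of w] by simp
  obtain i where i: "i < length L" "L ! i = x" using x setL by (metis in_set_conv_nth)
  obtain j where j: "j < length L" "L ! j = y" using y setL by (metis in_set_conv_nth)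
  have sb: "sorted_wrt (\<ge>) (map last L)" using pc unfolding perfectly_clustering_def bw_def L_def by simp
  have "i \<noteq> j" using i j l by auto
  moreover have "\<not> j < i"
  proof
    assume "j < i"
    then have "last (L ! i) \<le> last (L ! j)" using sb i j by (auto simp: sorted_wrt_iff_nth_less)
    then show False using i j l by simp
  qed
  ultimately have "i < j" by simp
  then show ?thesis using sL i j sorted_wrt_nth_less[OF sL, of i j] by simp
qed


lemma hd_less_list:
  fixes x y :: "'a::linorder list"
  shows "x \<noteq> [] \<Longrightarrow> y \<noteq> [] \<Longrightarrow> hd x < hd y \<Longrightarrow> x < y"
  by (cases x; cases y) auto

definition rk :: "'a::linorder list \<Rightarrow> nat \<Rightarrow> int" where
  "rk w p = (\<Sum>q<length w. of_bool (rotate q w < rotate p w))"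

definition nlt :: "'a::linorder list \<Rightarrow> 'a \<Rightarrow> int" where
  "nlt w c = (\<Sum>q<length w. of_bool (w ! q < c))"

definition ngt :: "'a::linorder list \<Rightarrow> 'a \<Rightarrow> int" where
  "ngt w c = (\<Sum>q<length w. of_bool (c < w ! q))"

definition rkx :: "'a::linorder list \<Rightarrow> nat \<Rightarrow> int" where
  "rkx w p = (\<Sum>q<length w. of_bool (w ! q = w ! p \<and> rotate q w < rotate p w))"

lemma rk_split:
  fixes w :: "'a::linorder list"
  assumes p: "p < length w"
  shows "rk w p = nlt w (w ! p) + rkx w p"
proof -
  have ne: "w \<noteq> []" using p by (cases w) auto
  have "of_bool (rotate q w < rotate p w) = (of_bool (w ! q < w ! p) + of_bool (w ! q = w ! p \<and> rotate q w < rotate p w) :: int)"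
    if q: "q < length w" for q
  proof -
    have hq: "hd (rotate q w) = w ! q" using q by (rule rot_hd)
    have hp: "hd (rotate p w) = w ! p" using p by (rule rot_hd)
    consider "w ! q < w ! p" | "w ! q = w ! p" | "w ! p < w ! q" by fastforce
    then show ?thesis
    proof cases
      case 1
      then have "rotate q w < rotate p w" using hq hp ne by (intro hd_less_list) auto
      then show ?thesis using 1 by simp
    next
      case 2 then show ?thesis by simp
    next
      case 3
      then have "rotate p w < rotate q w" using hq hp ne by (intro hd_less_list) auto
      then show ?thesis using 3 by auto
    qed
  qed
  then show ?thesis unfolding rk_def nlt_def rkx_def by (simp add: sum.distrib)
qed

lemma rkx_nonneg: "rkx w p \<ge> 0"
  unfolding rkx_def by (intro sum_nonneg) auto

lemma nlt_nonneg: "nlt w c \<ge> 0"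
  unfolding nlt_def by (intro sum_nonneg) auto

lemma rk_ge_nlt: "p < length w \<Longrightarrow> rk w p \<ge> nlt w (w ! p)"
  using rk_split[of p w] rkx_nonneg[of w p] by simp

lemma sum_pred_reindex:
  assumes n: "0 < (n::nat)"
  shows "(\<Sum>q<n. g ((q + n - 1) mod n)) = (\<Sum>q<n. g q)"
proof (rule sum.reindex_bij_witness[where i = "\<lambda>q. Suc q mod n" and j = "\<lambda>q. (q + n - 1) mod n"])
  fix a assume a: "a \<in> {..<n}"
  show "Suc ((a + n - 1) mod n) mod n = a"
  proof (cases a)
    case 0 then show ?thesis using n by simp
  next
    case (Suc m)
    then have "a + n - 1 = m + n" by simp
    then show ?thesis using a Suc by simp
  qed
  show "(a + n - 1) mod n \<in> {..<n}" using n by simp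
  show "g ((a + n - 1) mod n) = g ((a + n - 1) mod n)" by simp
next
  fix b assume b: "b \<in> {..<n}"
  show "Suc b mod n \<in> {..<n}" using n by simp
  show "(Suc b mod n + n - 1) mod n = b"
  proof (cases "Suc b = n")
    case True then show ?thesis using n by simp
  next
    case False
    then have "Suc b < n" using b by simp
    then show ?thesis by simp
  qed
qed

lemma rk_suc:
  fixes w :: "'a::linorder list"
  assumes pc: "perfectly_clustering w" and p: "Suc p < length w"
  shows "rk w (Suc p) = ngt w (w ! p) + rkx w p"
proof -
  define n where "n = length w"
  have n0: "0 < n" using p unfolding n_def by (cases w) auto
  have ne: "w \<noteq> []" using n0 n_def by auto
  define c where "c = w ! p"
  have p': "p < n" using p n_def by simp
  have lp: "last (rotate (Suc p) w) = c"
  proof -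
    have "last (rotate (Suc p) w) = last (rotate1 (rotate p w))" by simp
    also have "\<dots> = hd (rotate p w)" using ne by (cases "rotate p w") auto
    also have "\<dots> = c" using p' n_def c_def by (simp add: rot_hd)
    finally show ?thesis .
  qed
  have pt: "of_bool (rotate q w < rotate (Suc p) w) =
      (of_bool (c < w ! ((q + n - 1) mod n)) +
       of_bool (w ! ((q + n - 1) mod n) = c \<and> rotate ((q + n - 1) mod n) w < rotate p w) :: int)"
    if q: "q < n" for q
  proof -
    define r where "r = (q + n - 1) mod n"
    have r: "r < n" using n0 r_def by simp
    have lq: "last (rotate q w) = w ! r" using rot_last[of q w] q n_def r_def by simp
    have rq: "rotate q w = rotate1 (rotate r w)" using rot_pred[of q w] q n_def r_def by simp
    have cq: "rotate q w \<in> conjugates w" using q n_def by (simp add: rot_in_conj)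
    have cp: "rotate (Suc p) w \<in> conjugates w" using rot_in_conj[OF p] .
    consider "c < w ! r" | "w ! r = c" | "w ! r < c" by fastforce
    then show ?thesis
    proof cases
      case 1
      then have "rotate q w < rotate (Suc p) w" using pc_order[OF pc cq cp] lq lp by simp
      then show ?thesis using 1 r_def by simp
    next
      case 3
      then have "rotate (Suc p) w < rotate q w" using pc_order[OF pc cp cq] lq lp by simp
      then show ?thesis using 3 r_def by auto
    next
      case 2
      have hr: "hd (rotate r w) = c" using r n_def 2 by (simp add: rot_hd)
      have hp: "hd (rotate p w) = c" using p' n_def c_def by (simp add: rot_hd)
      obtain s where s: "rotate r w = c # s" using hr ne by (cases "rotate r w") auto
      obtain t where t: "rotate p w = c # t" using hp ne by (cases "rotate p w") auto
      have "length (c # s) = length (c # t)" using s t by (metis length_rotate)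
      then have len: "length s = length t" by simp
      have "rotate (Suc p) w = rotate1 (rotate p w)" by simp
      then have "(rotate q w < rotate (Suc p) w) = (s @ [c] < t @ [c])" using rq s t by simp
      also have "\<dots> = (s < t)" using len by (rule snoc_less_iff)
      also have "\<dots> = (rotate r w < rotate p w)" using s t by simp
      finally show ?thesis using 2 r_def by simp
    qed
  qed
  have "rk w (Suc p) = (\<Sum>q<n. of_bool (c < w ! ((q + n - 1) mod n))) +
       (\<Sum>q<n. of_bool (w ! ((q + n - 1) mod n) = c \<and> rotate ((q + n - 1) mod n) w < rotate p w))"
    unfolding rk_def n_def[symmetric] using pt by (simp add: sum.distrib)
  also have "\<dots> = (\<Sum>q<n. of_bool (c < w ! q)) + (\<Sum>q<n. of_bool (w ! q = c \<and> rotate q w < rotate p w))"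
    by (simp only: sum_pred_reindex[OF n0, of "\<lambda>q. of_bool (c < w ! q)"]
      sum_pred_reindex[OF n0, of "\<lambda>q. of_bool (w ! q = c \<and> rotate q w < rotate p w)"])
  finally show ?thesis unfolding ngt_def rkx_def n_def c_def by simp
qed

lemma rk_suc_diff:
  assumes pc: "perfectly_clustering w" and p: "Suc p < length w"
  shows "rk w (Suc p) = rk w p + (ngt w (w ! p) - nlt w (w ! p))"
  using rk_suc[OF assms] rk_split[of p w] p by simp

lemma rk_suc_ge:
  assumes pc: "perfectly_clustering w" and p: "Suc p < length w"
  shows "rk w (Suc p) \<ge> ngt w (w ! p)"
  using rk_suc[OF assms] rkx_nonneg[of w p] by simp

lemma rk_zero:
  assumes "lyndon w"
  shows "rk w 0 = 0"
proof -
  have "\<not> rotate q w < w" if "q < length w" for q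
  proof
    assume a: "rotate q w < w"
    then have "rotate q w \<noteq> w" by auto
    moreover have "rotate q w \<in> conjugates w" using that by (rule rot_in_conj)
    ultimately have "w < rotate q w" using assms unfolding lyndon_def by blast
    then show False using a by simp
  qed
  then show ?thesis unfolding rk_def by simp
qed

lemma rk_total:
  fixes w :: "'a::linorder list"
  shows "2 * (\<Sum>p<length w. rk w p) \<le> int (length w) * (int (length w) - 1)"
proof -
  define n where "n = length w"
  let ?R = "\<lambda>p q. rotate p w"
  have S: "(\<Sum>p<n. rk w p) = (\<Sum>p<n. \<Sum>q<n. of_bool (rotate q w < rotate p w) :: int)"
    unfolding rk_def n_def by simp
  have S2: "(\<Sum>p<n. \<Sum>q<n. of_bool (rotate q w < rotate p w) :: int) =
            (\<Sum>p<n. \<Sum>q<n. of_bool (rotate p w < rotate q w) :: int)"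
    by (rule sum.swap)
  have pt: "of_bool (rotate q w < rotate p w) + of_bool (rotate p w < rotate q w) \<le> (1 - of_bool (q = p) :: int)"
    for p q by (cases "q = p") auto
  have "2 * (\<Sum>p<n. rk w p) = (\<Sum>p<n. \<Sum>q<n. of_bool (rotate q w < rotate p w) + of_bool (rotate p w < rotate q w) :: int)"
    using S S2 by (simp add: sum.distrib)
  also have "\<dots> \<le> (\<Sum>p<n. \<Sum>q<n. (1 - of_bool (q = p) :: int))"
    by (intro sum_mono pt)
  also have "\<dots> = (\<Sum>p<n. (int n - 1))"
  proof (rule sum.cong)
    fix p assume "p \<in> {..<n}"
    then have "(\<Sum>q<n. (of_bool (q = p) :: int)) = 1"
      by (simp add: of_bool_def sum.delta)
    then show "(\<Sum>q<n. (1 - of_bool (q = p) :: int)) = int n - 1"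
      by (simp add: sum_subtractf)
  qed simp
  also have "\<dots> = int n * (int n - 1)" by simp
  finally show ?thesis unfolding n_def .
qed


lemma block_sum:
  fixes w :: "'a::linorder list" and \<pi> :: "'a list"
  assumes pc: "perfectly_clustering w" and pal: "rev \<pi> = \<pi>"
    and a: "a + length \<pi> < length w"
    and nth: "\<And>s. s < length \<pi> \<Longrightarrow> w ! (a + s) = \<pi> ! s"
  shows "2 * (\<Sum>t<Suc (length \<pi>). rk w (a + t)) =
         int (Suc (length \<pi>)) * (rk w a + rk w (a + length \<pi>))"
proof -
  define l where "l = length \<pi>"
  define \<delta> where "\<delta> c = ngt w c - nlt w c" for c
  define D where "D t = sum_list (map \<delta> (take t \<pi>))" for t
  have R: "rk w (a + t) = rk w a + D t" if "t \<le> l" for t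
    using that
  proof (induction t)
    case 0 then show ?case by (simp add: D_def)
  next
    case (Suc t)
    then have t: "t < l" by simp
    have "rk w (a + Suc t) = rk w (Suc (a + t))" by simp
    also have "\<dots> = rk w (a + t) + (ngt w (w ! (a + t)) - nlt w (w ! (a + t)))"
      using rk_suc_diff[OF pc, of "a + t"] a t l_def by simp
    also have "w ! (a + t) = \<pi> ! t" using nth t l_def by simp
    also have "D (Suc t) = D t + \<delta> (\<pi> ! t)"
      unfolding D_def using t l_def by (simp add: take_Suc_conv_app_nth)
    ultimately show ?case using Suc t \<delta>_def by simp
  qed
  have Dpal: "D t + D (l - t) = D l" if "t \<le> l" for t
  proof -
    have "take (l - t) \<pi> = take (l - t) (rev \<pi>)" using pal by simp
    also have "\<dots> = rev (drop t \<pi>)" using l_def by (simp add: rev_drop)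
    finally have "D (l - t) = sum_list (map \<delta> (drop t \<pi>))"
      unfolding D_def by (simp add: rev_map[symmetric] sum_list_rev)
    moreover have "sum_list (map \<delta> (take t \<pi>)) + sum_list (map \<delta> (drop t \<pi>)) = sum_list (map \<delta> \<pi>)"
      by (metis append_take_drop_id map_append sum_list_append)
    ultimately show ?thesis unfolding D_def l_def by simp
  qed
  have rev_sum: "(\<Sum>t<Suc l. D (l - t)) = (\<Sum>t<Suc l. D t)"
    using sum.nat_diff_reindex[of "D" "Suc l"] by simp
  have "2 * (\<Sum>t<Suc l. D t) = (\<Sum>t<Suc l. D t + D (l - t))"
    using rev_sum by (simp add: sum.distrib)
  also have "\<dots> = (\<Sum>t<Suc l. D l)"
    by (rule sum.cong) (auto simp: Dpal)
  finally have SD: "2 * (\<Sum>t<Suc l. D t) = int (Suc l) * D l" by simp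
  have "(\<Sum>t<Suc l. rk w (a + t)) = (\<Sum>t<Suc l. rk w a + D t)"
    by (rule sum.cong) (auto simp: R)
  also have "\<dots> = int (Suc l) * rk w a + (\<Sum>t<Suc l. D t)"
    by (simp add: sum.distrib)
  finally have "2 * (\<Sum>t<Suc l. rk w (a + t)) = 2 * int (Suc l) * rk w a + int (Suc l) * D l"
    using SD by (simp add: algebra_simps)
  also have "\<dots> = int (Suc l) * (rk w a + rk w (a + l))"
    using R[of l] by (simp add: algebra_simps)
  finally show ?thesis unfolding l_def .
qed


lemma concat_split:
  "j \<le> k \<Longrightarrow> concat (map f [0..<k]) = concat (map f [0..<j]) @ concat (map f [j..<k])"
  by (metis concat_append le_add_diff_inverse map_append upt_add_eq_append zero_le)

lemma concat_split2:
  "j \<le> k \<Longrightarrow> i \<le> j \<Longrightarrow> concat (map f [i..<k]) = concat (map f [i..<j]) @ concat (map f [j..<k])"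
  by (metis concat_append le_add_diff_inverse map_append upt_add_eq_append)

lemma fblock_len:
  "length (fblock as ps j) = Suc (if j + 1 < length as then length (ps ! j) else 0)"
  by (simp add: fblock_def)

theorem lemma4p6:
  fixes w as :: "'a::linorder list" and ps :: "'a list list"
  assumes "lyndon w" and "perfectly_clustering w"
    and "palindromic_special_factorization w as ps"
    and "i < length as"
  shows "(let u = concat (map (fblock as ps) [i..<length as]) @
                  concat (map (fblock as ps) [0..<i])
          in u \<in> conjugates w \<and> hd u = as ! i \<and>
             (\<forall>v \<in> conjugates w. v \<noteq> [] \<and> hd v = as ! i \<longrightarrow> u \<le> v))"
proof -
  note lyn = assms(1) and pc = assms(2)
  define f where "f = fblock as ps"
  define k where "k = length as"
  define n where "n = length w"
  have sas: "sorted_wrt (<) as" and setas: "set as = set w" and lps: "length ps = k - 1"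
    and wdef: "w = concat (map f [0..<k])" and pal: "\<And>p. p \<in> set ps \<Longrightarrow> rev p = p"
    using assms(3) unfolding palindromic_special_factorization_def special_factorization_def
      f_def k_def by auto
  have ik: "i < k" using assms(4) k_def by simp
  have wne: "w \<noteq> []" using pc unfolding perfectly_clustering_def primitive_def by simp
  have n0: "0 < n" using wne n_def by simp
  define P where "P j = length (concat (map f [0..<j]))" for j
  have PSuc: "P (Suc j) = P j + length (f j)" for j unfolding P_def by simp
  have flen: "length (f j) = Suc (if Suc j < k then length (ps ! j) else 0)" for j
    unfolding f_def k_def using fblock_len[of as ps j] by simp
  have Pk: "P k = n" unfolding P_def n_def using wdef by simp
  have Pnth: "w ! (P j + t) = f j ! t" if "j < k" "t < length (f j)" for j t
  proof -
    have "w = concat (map f [0..<j]) @ (f j @ concat (map f [Suc j..<k]))"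
      using wdef concat_split[of j k f] that by (simp add: upt_conv_Cons)
    then show ?thesis unfolding P_def using that by (simp add: nth_append)
  qed
  have Pas: "w ! (P j) = as ! j" if "j < k" for j
    using Pnth[OF that, of 0] flen[of j] by (simp add: f_def fblock_def)
  have Ppi: "w ! (Suc (P j) + s) = ps ! j ! s" if "Suc j < k" "s < length (ps ! j)" for j s
    using Pnth[of j "Suc s"] flen[of j] that by (simp add: f_def fblock_def k_def)
  have PSuc2: "P (Suc j) = Suc (P j) + length (ps ! j)" if "Suc j < k" for j
    using PSuc[of j] flen[of j] that by simp
  have Plast: "Suc (P (k - 1)) = n" using PSuc[of "k - 1"] flen[of "k - 1"] Pk ik by simp
  have Pmono: "P j \<le> P j'" if "j \<le> j'" for j j'
    using that unfolding P_def by (induction j' rule: dec_induct) auto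
  have Plt: "P j < n" if "j < k" for j
    using Pmono[of j "k - 1"] Plast that by fastforce
  have sorted_iff: "(as ! a < as ! b) = (a < b)" if "a < k" "b < k" for a b
  proof -
    have "a < b \<Longrightarrow> as ! a < as ! b" using sas that k_def by (simp add: sorted_wrt_nth_less)
    moreover have "b < a \<Longrightarrow> as ! b < as ! a" using sas that k_def by (simp add: sorted_wrt_nth_less)
    ultimately show ?thesis by (cases a b rule: linorder_cases) auto
  qed
  have letters: "ngt w (as ! j) + nlt w (as ! Suc j) = int n" if "Suc j < k" for j
  proof -
    have "of_bool (as ! j < w ! q) + of_bool (w ! q < as ! Suc j) = (1 :: int)" if q: "q < n" for q
    proof -
      have "w ! q \<in> set as" using q setas n_def by simp
      then obtain m where m: "m < k" "as ! m = w ! q" using k_def by (metis in_set_conv_nth)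
      have "(as ! j < as ! m) = (j < m)" using sorted_iff[of j m] \<open>Suc j < k\<close> m(1) by simp
      moreover have "(as ! m < as ! Suc j) = (m < Suc j)" using sorted_iff[of m "Suc j"] \<open>Suc j < k\<close> m(1) by simp
      ultimately show ?thesis using m by auto
    qed
    then have "(\<Sum>q<n. of_bool (as ! j < w ! q) + of_bool (w ! q < as ! Suc j) :: int) = (\<Sum>q<n. 1)"
      by (intro sum.cong) auto
    then show ?thesis unfolding ngt_def nlt_def n_def[symmetric] by (simp add: sum.distrib)
  qed
  have Kge: "rk w (Suc (P j)) + rk w (P (Suc j)) \<ge> int n" if j: "Suc j < k" for j
  proof -
    have "rk w (Suc (P j)) \<ge> ngt w (w ! P j)"
      using rk_suc_ge[OF pc, of "P j"] Plt[of "Suc j"] PSuc2[OF j] n_def j by simp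
    moreover have "rk w (P (Suc j)) \<ge> nlt w (w ! P (Suc j))"
      using rk_ge_nlt[of "P (Suc j)" w] Plt[OF j] n_def by simp
    ultimately show ?thesis using letters[OF j] Pas[of j] Pas[OF j] j by simp
  qed
  have block: "2 * (\<Sum>p\<in>{Suc (P j)..<Suc (P (Suc j))}. rk w p) =
      int (Suc (length (ps ! j))) * (rk w (Suc (P j)) + rk w (P (Suc j)))" if j: "Suc j < k" for j
  proof -
    have jps: "ps ! j \<in> set ps" using j lps by simp
    have "(\<Sum>p\<in>{Suc (P j)..<Suc (P (Suc j))}. rk w p) = (\<Sum>t<Suc (length (ps ! j)). rk w (Suc (P j) + t))"
    proof -
      have "{Suc (P j)..<Suc (P (Suc j))} = {0 + Suc (P j)..<Suc (length (ps ! j)) + Suc (P j)}"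
        using PSuc2[OF j] by (simp add: add.commute)
      then show ?thesis
        using sum.shift_bounds_nat_ivl[of "rk w" 0 "Suc (P j)" "Suc (length (ps ! j))"]
        by (simp add: lessThan_atLeast0 add.commute)
    qed
    moreover have "2 * (\<Sum>t<Suc (length (ps ! j)). rk w (Suc (P j) + t)) =
       int (Suc (length (ps ! j))) * (rk w (Suc (P j)) + rk w (Suc (P j) + length (ps ! j)))"
      by (rule block_sum[OF pc pal[OF jps]])
        (use PSuc2[OF j] Plt[OF j] n_def Ppi[OF j] in auto)
    ultimately show ?thesis using PSuc2[OF j] by simp
  qed
  have G: "2 * (\<Sum>p\<in>{Suc (P a)..<Suc (P b)}. rk w p) \<ge> (int (P b) - int (P a)) * int n"
    if "a \<le> b" "b < k" for a b
    using that
  proof (induction b rule: dec_induct)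
    case base then show ?case by simp
  next
    case (step b)
    have j: "Suc b < k" using step by simp
    have "(\<Sum>p\<in>{Suc (P a)..<Suc (P (Suc b))}. rk w p) =
          (\<Sum>p\<in>{Suc (P a)..<Suc (P b)}. rk w p) + (\<Sum>p\<in>{Suc (P b)..<Suc (P (Suc b))}. rk w p)"
      using Pmono[of a b] Pmono[of b "Suc b"] step by (intro sum.atLeastLessThan_concat[symmetric]) auto
    moreover have "2 * (\<Sum>p\<in>{Suc (P b)..<Suc (P (Suc b))}. rk w p) \<ge> (int (P (Suc b)) - int (P b)) * int n"
    proof -
      have "(int (P (Suc b)) - int (P b)) * int n = int (Suc (length (ps ! b))) * int n"
        using PSuc2[OF j] by simp
      also have "\<dots> \<le> int (Suc (length (ps ! b))) * (rk w (Suc (P b)) + rk w (P (Suc b)))"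
        using Kge[OF j] by (intro mult_left_mono) auto
      finally show ?thesis using block[OF j] by simp
    qed
    ultimately show ?case using step by (simp add: algebra_simps)
  qed
  have key: "rk w (P i) \<le> nlt w (as ! i)"
  proof (cases i)
    case 0
    then show ?thesis using rk_zero[OF lyn] nlt_nonneg[of w] by (simp add: P_def)
  next
    case (Suc j)
    have j: "Suc j < k" using Suc ik by simp
    have total: "(\<Sum>p<n. rk w p) = rk w 0 + (\<Sum>p\<in>{Suc (P 0)..<Suc (P (k - 1))}. rk w p)"
    proof -
      have "{..<n} = {0..<Suc 0} \<union> {Suc 0..<n}" using n0 by auto
      then have "(\<Sum>p<n. rk w p) = (\<Sum>p\<in>{0..<Suc 0}. rk w p) + (\<Sum>p\<in>{Suc 0..<n}. rk w p)"
        by (simp add: sum.union_disjoint)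
      then show ?thesis using Plast by (simp add: P_def)
    qed
    have split3: "(\<Sum>p\<in>{Suc (P 0)..<Suc (P (k - 1))}. rk w p) =
       (\<Sum>p\<in>{Suc (P 0)..<Suc (P j)}. rk w p) + (\<Sum>p\<in>{Suc (P j)..<Suc (P (Suc j))}. rk w p)
       + (\<Sum>p\<in>{Suc (P (Suc j))..<Suc (P (k - 1))}. rk w p)"
      using Pmono[of 0 j] Pmono[of j "Suc j"] Pmono[of "Suc j" "k - 1"] j
      by (subst sum.atLeastLessThan_concat[symmetric, of _ "Suc (P (Suc j))"],
          simp, simp, subst sum.atLeastLessThan_concat[symmetric, of _ "Suc (P j)"], auto)
    have g1: "2 * (\<Sum>p\<in>{Suc (P 0)..<Suc (P j)}. rk w p) \<ge> (int (P j) - int (P 0)) * int n"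
      using G[of 0 j] j by simp
    have g3: "2 * (\<Sum>p\<in>{Suc (P (Suc j))..<Suc (P (k - 1))}. rk w p) \<ge> (int (P (k - 1)) - int (P (Suc j))) * int n"
      using G[of "Suc j" "k - 1"] j by simp
    have tot: "2 * (\<Sum>p<n. rk w p) \<le> int n * (int n - 1)" using rk_total[of w] n_def by simp
    have P0: "P 0 = 0" by (simp add: P_def)
    define K where "K = rk w (Suc (P j)) + rk w (P (Suc j))"
    define L where "L = int (Suc (length (ps ! j)))"
    have LP: "L = int (P (Suc j)) - int (P j)" using PSuc2[OF j] L_def by simp
    have Pn: "int (P (k - 1)) = int n - 1" using Plast by linarith
    define S1 where "S1 = (\<Sum>p\<in>{Suc (P 0)..<Suc (P j)}. rk w p)"
    define S2 where "S2 = (\<Sum>p\<in>{Suc (P j)..<Suc (P (Suc j))}. rk w p)"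
    define S3 where "S3 = (\<Sum>p\<in>{Suc (P (Suc j))..<Suc (P (k - 1))}. rk w p)"
    define T where "T = (\<Sum>p<n. rk w p)"
    have e1: "T = S1 + S2 + S3" using total split3 rk_zero[OF lyn]
      unfolding S1_def S2_def S3_def T_def by simp
    have e2: "2 * S2 = L * K" using block[OF j] unfolding S2_def K_def L_def .
    have e3: "2 * S1 \<ge> int (P j) * int n" using g1 P0 unfolding S1_def by simp
    have e4: "2 * S3 \<ge> (int n - 1 - int (P (Suc j))) * int n" using g3 Pn unfolding S3_def by simp
    have e5: "2 * T \<le> int n * (int n - 1)" using tot unfolding T_def .
    have e6: "int n * (int n - 1) - int (P j) * int n - (int n - 1 - int (P (Suc j))) * int n = L * int n"
      unfolding LP by (simp add: algebra_simps)
    have "L * K \<le> L * int n" using e1 e2 e3 e4 e5 e6 by linarith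
    then have "K \<le> int n" using L_def by (simp add: mult_le_cancel_left_pos)
    moreover have "rk w (Suc (P j)) \<ge> ngt w (as ! j)"
      using rk_suc_ge[OF pc, of "P j"] Plt[of "Suc j"] PSuc2[OF j] n_def j Pas[of j] by simp
    ultimately show ?thesis using letters[OF j] K_def Suc by simp
  qed
  define u where "u = concat (map f [i..<k]) @ concat (map f [0..<i])"
  have u: "u = rotate (P i) w"
  proof -
    have "w = concat (map f [0..<i]) @ concat (map f [i..<k])"
      using wdef concat_split[of i k f] ik by simp
    moreover have "length (concat (map f [0..<i])) = P i" by (simp add: P_def)
    ultimately show ?thesis unfolding u_def using Plt[OF ik] n_def
      by (metis append_eq_conv_conj mod_less rotate_drop_take)
  qed
  have uc: "u \<in> conjugates w" using u Plt[OF ik] n_def by (simp add: rot_in_conj)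
  have uh: "hd u = as ! i" using u Plt[OF ik] n_def Pas[OF ik] by (simp add: rot_hd)
  have umin: "u \<le> v" if v: "v \<in> conjugates w" "v \<noteq> []" "hd v = as ! i" for v
  proof (rule ccontr)
    assume "\<not> u \<le> v"
    then have vu: "v < u" by simp
    obtain q where q: "q < n" "v = rotate q w" using conj_rot[OF v(1) wne] n_def by auto
    have wq: "w ! q = as ! i" using q v(3) n_def by (simp add: rot_hd)
    have pt: "of_bool (w ! q' < as ! i) + of_bool (q' = q) \<le> (of_bool (rotate q' w < u) :: int)"
      if q': "q' < n" for q'
    proof (cases "q' = q")
      case True then show ?thesis using wq vu q by simp
    next
      case False
      show ?thesis
      proof (cases "w ! q' < as ! i")
        case True
        then have "rotate q' w < u"
          using hd_less_list[of "rotate q' w" u] q' n_def rot_hd[of q' w] uh wne u by simp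
        then show ?thesis using False by simp
      next
        case False then show ?thesis using \<open>q' \<noteq> q\<close> by simp
      qed
    qed
    have "nlt w (as ! i) + 1 = (\<Sum>q'<n. of_bool (w ! q' < as ! i) + of_bool (q' = q) :: int)"
      unfolding nlt_def n_def[symmetric] using q(1) by (simp add: sum.distrib of_bool_def sum.delta)
    also have "\<dots> \<le> (\<Sum>q'<n. (of_bool (rotate q' w < u) :: int))"
      by (intro sum_mono pt) simp
    also have "\<dots> = rk w (P i)" unfolding rk_def n_def u by simp
    finally show False using key by simp
  qed
  show ?thesis unfolding Let_def f_def[symmetric] k_def[symmetric] u_def[symmetric]
    using uc uh umin by blast
qed

end
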